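(* Let $X$ be a countable set and $\mathcal{A}\subseteq\mathcal{P}_\infty(X)$ hereditary. The following are equivalent: (i) $\mathcal{A}$ is an M-family; (ii) for every decreasing sequence $(D_n)_n$ in $\mathrm{co}(\mathcal{A})$ there is $A\in\mathcal{A}$ with $A\setminus D_n$ finite for every $n$; (iii) for every sequence $(A_n)_n$ in $\mathcal{A}$ there is $A\in\mathcal{A}$ with $A\cap A_n\neq\varnothing$ for infinitely many $n$.
   Context: $\mathcal{P}_\infty(X)$: infinite subsets of $X$. Hereditary: $A\in\mathcal{A}$, $A'\subseteq A$ infinite imply $A'\in\mathcal{A}$. An M-family is a hereditary family $\mathcal{A}$ such that for every sequence $(A_n)_n$ in $\mathcal{A}$ there is $A\in\mathcal{A}$ with $A\setminus\bigcup_{i\ge n}A_i$ finite for every $n$. $\mathrm{co}(\mathcal{A})=\{B\in\mathcal{P}_\infty(X):\exists A\in\mathcal{A},\ B\cap A\text{ infinite}\}$. *)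

theory Defs
  imports Main "HOL-Library.Countable_Set"
begin

definition Pinf :: "'a set \<Rightarrow> 'a set set" where
  "Pinf X = {B. B \<subseteq> X \<and> infinite B}"

definition hereditary :: "'a set set \<Rightarrow> bool" where
  "hereditary \<A> \<longleftrightarrow> (\<forall>A\<in>\<A>. \<forall>A'. A' \<subseteq> A \<and> infinite A' \<longrightarrow> A' \<in> \<A>)"

definition M_family :: "'a set set \<Rightarrow> bool" where
  "M_family \<A> \<longleftrightarrow> hereditary \<A> \<and>
     (\<forall>As :: nat \<Rightarrow> 'a set. (\<forall>n. As n \<in> \<A>) \<longrightarrow>
        (\<exists>A\<in>\<A>. \<forall>n. finite (A - (\<Union>i\<in>{n..}. As i))))"

definition co :: "'a set \<Rightarrow> 'a set set \<Rightarrow> 'a set set" where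
  "co X \<A> = {B \<in> Pinf X. \<exists>A\<in>\<A>. infinite (B \<inter> A)}"

end

theory Submission
  imports Defs
begin

lemma herD: "hereditary \<A> \<Longrightarrow> A \<in> \<A> \<Longrightarrow> A' \<subseteq> A \<Longrightarrow> infinite A' \<Longrightarrow> A' \<in> \<A>"
  unfolding hereditary_def by blast

lemma i_ii:
  assumes "\<A> \<subseteq> Pinf X" and M: "M_family \<A>"
    and Dco: "\<forall>n. D n \<in> co X \<A>" and dec: "\<forall>n. D (Suc n) \<subseteq> D n"
  shows "\<exists>A\<in>\<A>. \<forall>n. finite (A - D n)"
proof -
  have her: "hereditary \<A>" using M by (simp add: M_family_def)
  have "\<forall>n. \<exists>A. A \<in> \<A> \<and> infinite (D n \<inter> A)" using Dco by (auto simp: co_def)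
  then obtain W where W: "\<And>n. W n \<in> \<A> \<and> infinite (D n \<inter> W n)" by metis
  define C where "C n = D n \<inter> W n" for n
  have C: "\<forall>n. C n \<in> \<A>" using W herD[OF her] unfolding C_def by (meson inf_le2)
  then obtain A where A: "A \<in> \<A>" "\<forall>n. finite (A - (\<Union>i\<in>{n..}. C i))"
    using M unfolding M_family_def by blast
  have "\<And>n i. n \<le> i \<Longrightarrow> D i \<subseteq> D n" using dec by (metis lift_Suc_antimono_le)
  hence sub: "\<And>n. (\<Union>i\<in>{n..}. C i) \<subseteq> D n" unfolding C_def by fastforce
  show ?thesis
  proof (intro bexI[OF _ A(1)] allI)
    fix n show "finite (A - D n)"
      by (rule finite_subset[OF _ A(2)[rule_format, of n]]) (use sub[of n] in auto)
  qed
qed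

lemma ii_i:
  assumes P: "\<A> \<subseteq> Pinf X" and her: "hereditary \<A>"
    and H: "\<forall>D :: nat \<Rightarrow> 'a set. (\<forall>n. D n \<in> co X \<A>) \<and> (\<forall>n. D (Suc n) \<subseteq> D n) \<longrightarrow>
              (\<exists>A\<in>\<A>. \<forall>n. finite (A - D n))"
  shows "M_family \<A>"
  unfolding M_family_def
proof (intro conjI her allI impI)
  fix As :: "nat \<Rightarrow> 'a set" assume As: "\<forall>n. As n \<in> \<A>"
  define D where "D n = (\<Union>i\<in>{n..}. As i)" for n
  have "D n \<in> co X \<A>" for n
  proof -
    have a: "As n \<subseteq> X" "infinite (As n)" using As P by (auto simp: Pinf_def)
    have AX: "\<And>i. As i \<subseteq> X" using As P by (auto simp: Pinf_def)
    have "D n \<subseteq> X" unfolding D_def using AX by blast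
    moreover have "As n \<subseteq> D n" unfolding D_def by auto
    moreover have "infinite (D n)" using a(2) \<open>As n \<subseteq> D n\<close> finite_subset by blast
    moreover have "D n \<inter> As n = As n" using \<open>As n \<subseteq> D n\<close> by blast
    moreover have "\<exists>A\<in>\<A>. infinite (D n \<inter> A)"
      using As a(2) \<open>D n \<inter> As n = As n\<close> by metis
    ultimately show ?thesis unfolding co_def Pinf_def by blast
  qed
  moreover have "\<forall>n. D (Suc n) \<subseteq> D n" unfolding D_def by (force dest: Suc_leD)
  ultimately have "\<exists>A\<in>\<A>. \<forall>n. finite (A - D n)"
    using H[rule_format, of D] by blast
  thus "\<exists>A\<in>\<A>. \<forall>n. finite (A - (\<Union>i\<in>{n..}. As i))" unfolding D_def .
qed

lemma i_iii:
  fixes As :: "nat \<Rightarrow> 'a set"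
  assumes P: "\<A> \<subseteq> Pinf X" and M: "M_family \<A>" and As: "\<forall>n. As n \<in> \<A>"
  shows "\<exists>A\<in>\<A>. infinite {n. A \<inter> As n \<noteq> {}}"
proof -
  obtain A where A: "A \<in> \<A>" "\<forall>n. finite (A - (\<Union>i\<in>{n..}. As i))"
    using M As unfolding M_family_def by blast
  have inf: "infinite A" using A(1) P by (auto simp: Pinf_def)
  have "\<exists>i\<ge>n. A \<inter> As i \<noteq> {}" for n
  proof (rule ccontr)
    assume "\<not> ?thesis"
    hence "A - (\<Union>i\<in>{n..}. As i) = A" by auto
    thus False using A(2) inf by metis
  qed
  hence "infinite {n. A \<inter> As n \<noteq> {}}"
    by (simp add: infinite_nat_iff_unbounded_le)
  thus ?thesis using A(1) by blast
qed

lemma iii_ii: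
  assumes cX: "countable X" and P: "\<A> \<subseteq> Pinf X" and her: "hereditary \<A>"
    and H: "\<forall>As :: nat \<Rightarrow> 'a set. (\<forall>n. As n \<in> \<A>) \<longrightarrow>
              (\<exists>A\<in>\<A>. infinite {n. A \<inter> As n \<noteq> {}})"
    and Dco: "\<forall>n. D n \<in> co X \<A>" and dec: "\<forall>n. D (Suc n) \<subseteq> D n"
  shows "\<exists>A\<in>\<A>. \<forall>n. finite (A - D n)"
proof -
  define f where "f = to_nat_on X"
  have inj: "inj_on f X" unfolding f_def using cX by (simp add: inj_on_to_nat_on)
  have finlow: "finite {a\<in>X. f a < n}" for n
  proof (rule finite_imageD)
    show "finite (f ` {a\<in>X. f a < n})" by (rule finite_subset[of _ "{..<n}"]) auto
    show "inj_on f {a\<in>X. f a < n}" using inj by (rule inj_on_subset) auto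
  qed
  have "\<forall>n. \<exists>A. A \<in> \<A> \<and> infinite (D n \<inter> A)" using Dco by (auto simp: co_def)
  then obtain W where W: "\<And>n. W n \<in> \<A> \<and> infinite (D n \<inter> W n)" by metis
  define B where "B n = {a \<in> D n \<inter> W n. f a \<ge> n}" for n
  have WX: "W n \<subseteq> X" for n using W P by (auto simp: Pinf_def)
  have Binf: "infinite (B n)" for n
  proof
    assume "finite (B n)"
    moreover have "D n \<inter> W n \<subseteq> B n \<union> {a\<in>X. f a < n}" using WX[of n] unfolding B_def by auto
    ultimately have "finite (D n \<inter> W n)" using finlow by (meson finite_UnI finite_subset)
    thus False using W by blast
  qed
  have BW: "B n \<subseteq> W n" for n unfolding B_def by auto
  have B: "\<forall>n. B n \<in> \<A>"
    using herD[OF her conjunct1[OF W] BW Binf] by blast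
  then obtain A where A: "A \<in> \<A>" "infinite {n. A \<inter> B n \<noteq> {}}" using H by blast
  define N where "N = {n. A \<inter> B n \<noteq> {}}"
  define g where "g n = (SOME a. a \<in> A \<inter> B n)" for n
  have g: "g n \<in> A \<inter> B n" if "n \<in> N" for n
  proof -
    have "\<exists>a. a \<in> A \<inter> B n" using that unfolding N_def by auto
    thus ?thesis unfolding g_def by (rule someI_ex)
  qed
  have decle: "\<And>n i. n \<le> i \<Longrightarrow> D i \<subseteq> D n" using dec by (metis lift_Suc_antimono_le)
  have ginf: "infinite (g ` N)"
  proof
    assume "finite (g ` N)"
    hence "finite (f ` g ` N)" by simp
    then obtain M where M: "\<forall>x\<in>f ` g ` N. x \<le> M" by (auto simp: finite_nat_set_iff_bounded_le)
    obtain n where n: "n \<in> N" "n > M" using A(2) unfolding N_def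
      by (meson infinite_nat_iff_unbounded)
    have "f (g n) \<ge> n" using g[OF n(1)] unfolding B_def by auto
    moreover have "f (g n) \<le> M" using M n(1) by blast
    ultimately show False using n(2) by simp
  qed
  have gsub: "g ` N \<subseteq> A" using g by auto
  have gA: "g ` N \<in> \<A>" by (rule herD[OF her A(1) gsub ginf])
  show ?thesis
  proof (intro bexI[OF _ gA] allI)
    fix m
    have "g ` N - D m \<subseteq> g ` {n. n < m}"
    proof
      fix x assume "x \<in> g ` N - D m"
      then obtain n where x: "n \<in> N" "x = g n" "x \<notin> D m" by auto
      have "n < m"
      proof (rule ccontr)
        assume "\<not> n < m"
        hence "D n \<subseteq> D m" using decle[of m n] by simp
        moreover have "g n \<in> D n" using g[OF x(1)] unfolding B_def by auto
        ultimately show False using x by auto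
      qed
      thus "x \<in> g ` {n. n < m}" using x by auto
    qed
    thus "finite (g ` N - D m)" by (rule finite_subset) auto
  qed
qed

theorem fact3:
  fixes X :: "'a set" and \<A> :: "'a set set"
  assumes "countable X"
    and "\<A> \<subseteq> Pinf X"
    and "hereditary \<A>"
  shows "(M_family \<A> \<longleftrightarrow>
           (\<forall>D :: nat \<Rightarrow> 'a set. (\<forall>n. D n \<in> co X \<A>) \<and> (\<forall>n. D (Suc n) \<subseteq> D n) \<longrightarrow>
              (\<exists>A\<in>\<A>. \<forall>n. finite (A - D n))))
       \<and> (M_family \<A> \<longleftrightarrow>
           (\<forall>As :: nat \<Rightarrow> 'a set. (\<forall>n. As n \<in> \<A>) \<longrightarrow>
              (\<exists>A\<in>\<A>. infinite {n. A \<inter> As n \<noteq> {}})))"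
proof -
  have 1: "M_family \<A> \<longleftrightarrow>
           (\<forall>D :: nat \<Rightarrow> 'a set. (\<forall>n. D n \<in> co X \<A>) \<and> (\<forall>n. D (Suc n) \<subseteq> D n) \<longrightarrow>
              (\<exists>A\<in>\<A>. \<forall>n. finite (A - D n)))"
  proof
    assume M: "M_family \<A>"
    show "\<forall>D :: nat \<Rightarrow> 'a set. (\<forall>n. D n \<in> co X \<A>) \<and> (\<forall>n. D (Suc n) \<subseteq> D n) \<longrightarrow>
              (\<exists>A\<in>\<A>. \<forall>n. finite (A - D n))"
    proof (intro allI impI)
      fix D :: "nat \<Rightarrow> 'a set"
      assume "(\<forall>n. D n \<in> co X \<A>) \<and> (\<forall>n. D (Suc n) \<subseteq> D n)"
      thus "\<exists>A\<in>\<A>. \<forall>n. finite (A - D n)" using i_ii[OF assms(2) M, of D] by simp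
    qed
  next
    assume H: "\<forall>D :: nat \<Rightarrow> 'a set. (\<forall>n. D n \<in> co X \<A>) \<and> (\<forall>n. D (Suc n) \<subseteq> D n) \<longrightarrow>
              (\<exists>A\<in>\<A>. \<forall>n. finite (A - D n))"
    show "M_family \<A>" by (rule ii_i[OF assms(2,3) H])
  qed
  moreover have "M_family \<A> \<longleftrightarrow>
           (\<forall>As :: nat \<Rightarrow> 'a set. (\<forall>n. As n \<in> \<A>) \<longrightarrow>
              (\<exists>A\<in>\<A>. infinite {n. A \<inter> As n \<noteq> {}}))"
  proof
    assume "M_family \<A>" thus "\<forall>As :: nat \<Rightarrow> 'a set. (\<forall>n. As n \<in> \<A>) \<longrightarrow>
              (\<exists>A\<in>\<A>. infinite {n. A \<inter> As n \<noteq> {}})"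
      using i_iii[OF assms(2)] by simp
  next
    assume H: "\<forall>As :: nat \<Rightarrow> 'a set. (\<forall>n. As n \<in> \<A>) \<longrightarrow>
              (\<exists>A\<in>\<A>. infinite {n. A \<inter> As n \<noteq> {}})"
    have "\<forall>D :: nat \<Rightarrow> 'a set. (\<forall>n. D n \<in> co X \<A>) \<and> (\<forall>n. D (Suc n) \<subseteq> D n) \<longrightarrow>
              (\<exists>A\<in>\<A>. \<forall>n. finite (A - D n))"
      using iii_ii[OF assms H] by simp
    thus "M_family \<A>" using 1 by simp
  qed
  ultimately show ?thesis by (rule conjI)
qed

end
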